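(* Let $\varphi:[0,1]\to\mathbb{R}$ be a strictly increasing function of class $C^2[0,1]$ (so $\varphi'$ and $\varphi''$ are bounded on $[0,1]$), and set $s^-=\varphi(0)$, $s^+=\varphi(1)$. For a positive integer $N$ let $h=1/N$, $x_n=nh$, and let $\mathcal{M}^N_\varphi=\{s_n=\varphi(x_n): n=0,1,\dots,N\}$ be the induced non-uniform mesh on $[s^-,s^+]$, with steps $h_n=s_{n+1}-s_n>0$. For $1\le n\le N-1$ put $D_n=h_{n-1}^2+3h_{n-1}h_n+h_n^2$ and $$a_n=\frac{12h_n}{(h_{n-1}+h_n)D_n},\quad b_n=-\frac{12}{D_n},\quad c_n=\frac{12h_{n-1}}{(h_{n-1}+h_n)D_n},$$ $$d_n=\frac{h_n\,(h_{n-1}^2+h_nh_{n-1}-h_n^2)}{(h_{n-1}+h_n)D_n},\quad e_n=\frac{h_{n-1}\,(h_n^2+h_nh_{n-1}-h_{n-1}^2)}{(h_{n-1}+h_n)D_n}.$$ For a function $f\in C^6[s^-,s^+]$, writing $f_k=f(s_k)$ and $f''_k=f''(s_k)$, define the truncation error $E_n$ of the three-point compact approximation of the second derivative by $$d_nf''_{n-1}+f''_n+e_nf''_{n+1}=a_nf_{n-1}+b_nf_n+c_nf_{n+1}+E_n .$$ Then the approximation is fourth-order accurate on $\mathcal{M}^N_\varphi$: there is a constant $C$, depending only on $\varphi$ and $f$ (and not on $N$ or $n$), such that $|E_n|\le C h^4$ for all $N\ge 2$ and all $1\le n\le N-1$.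
   Context: The coefficients $a_n,b_n,c_n,d_n,e_n$ are those obtained by requiring that, after Taylor expansion about $s_n$, the coefficients of $f_n,f'_n,f''_n,f'''_n,f^{(4)}_n$ in $a_nf_{n-1}+b_nf_n+c_nf_{n+1}-(d_nf''_{n-1}+f''_n+e_nf''_{n+1})$ all vanish. Examples of admissible $\varphi$ on $[0,S]$ include the quadratic mesh $\varphi(x)=Sx^2$ and the Tavella–Randall mesh $\varphi(x)=K+\lambda\sinh(cx+c_1)$ with $0<K<S$, $\lambda>0$, $c=\sinh^{-1}((S-K)/\lambda)+\sinh^{-1}(K/\lambda)$, $c_1=-\sinh^{-1}(K/\lambda)$. *)

theory Defs
  imports "HOL-Analysis.Analysis"
begin

text \<open>f is of class C^k on the interval S, witnessed by the sequence of derivatives D: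
  D 0 = f, D (j+1) is the derivative of D j (one-sided at endpoints, i.e. within S),
  and D 0, ..., D k are continuous on S.\<close>
definition Ck_derivs :: "nat \<Rightarrow> (nat \<Rightarrow> real \<Rightarrow> real) \<Rightarrow> real set \<Rightarrow> bool" where
  "Ck_derivs k D S \<longleftrightarrow>
     (\<forall>j<k. \<forall>x\<in>S. (D j has_real_derivative D (Suc j) x) (at x within S)) \<and>
     (\<forall>j\<le>k. continuous_on S (D j))"

definition mesh :: "(real \<Rightarrow> real) \<Rightarrow> nat \<Rightarrow> nat \<Rightarrow> real" where
  "mesh \<phi> N n = \<phi> (real n / real N)"

definition step :: "(real \<Rightarrow> real) \<Rightarrow> nat \<Rightarrow> nat \<Rightarrow> real" where
  "step \<phi> N n = mesh \<phi> N (Suc n) - mesh \<phi> N n"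

text \<open>Coefficients in terms of hm = h_{n-1}, hp = h_n.\<close>
definition Dc :: "real \<Rightarrow> real \<Rightarrow> real" where
  "Dc hm hp = hm\<^sup>2 + 3 * hm * hp + hp\<^sup>2"

definition ca :: "real \<Rightarrow> real \<Rightarrow> real" where
  "ca hm hp = 12 * hp / ((hm + hp) * Dc hm hp)"
definition cb :: "real \<Rightarrow> real \<Rightarrow> real" where
  "cb hm hp = - 12 / Dc hm hp"
definition cc :: "real \<Rightarrow> real \<Rightarrow> real" where
  "cc hm hp = 12 * hm / ((hm + hp) * Dc hm hp)"
definition cd :: "real \<Rightarrow> real \<Rightarrow> real" where
  "cd hm hp = hp * (hm\<^sup>2 + hp * hm - hp\<^sup>2) / ((hm + hp) * Dc hm hp)"
definition ce :: "real \<Rightarrow> real \<Rightarrow> real" where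
  "ce hm hp = hm * (hp\<^sup>2 + hp * hm - hm\<^sup>2) / ((hm + hp) * Dc hm hp)"

definition trunc_err :: "(real \<Rightarrow> real) \<Rightarrow> (nat \<Rightarrow> real \<Rightarrow> real) \<Rightarrow> nat \<Rightarrow> nat \<Rightarrow> real" where
  "trunc_err \<phi> D N n =
     (let hm = step \<phi> N (n - 1); hp = step \<phi> N n;
          s = mesh \<phi> N in
      (cd hm hp * D 2 (s (n - 1)) + D 2 (s n) + ce hm hp * D 2 (s (Suc n)))
      - (ca hm hp * D 0 (s (n - 1)) + cb hm hp * D 0 (s n) + cc hm hp * D 0 (s (Suc n))))"

end

theory Submission
  imports Defs
begin

lemma poly_e0: "- 12 * v * W - (- 12 * (u + v) * W) - 12 * u * W = 0" for u v W :: real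
  by (simp add: field_simps eval_nat_numeral)
lemma poly_e1: "12 * v * W * u - 12 * u * W * v = 0" for u v W :: real
  by (simp add: field_simps eval_nat_numeral)
lemma poly_e2: "(v * (u^2 + v * u - v^2) * W) + 1 + (u * (v^2 + v * u - u^2) * W) - 12 * v * W * u ^ 2 / 2 - 12 * u * W * v ^ 2 / 2 = 1 - W * ((u + v) * (u^2 + 3 * u * v + v^2))" for u v W :: real
  by (simp add: field_simps eval_nat_numeral)
lemma poly_e3: "- (v * (u^2 + v * u - v^2) * W) * u + (u * (v^2 + v * u - u^2) * W) * v + 12 * v * W * u ^ 3 / 6 - 12 * u * W * v ^ 3 / 6 = 0" for u v W :: real
  by (simp add: field_simps eval_nat_numeral)
lemma poly_e4: "(v * (u^2 + v * u - v^2) * W) * u ^ 2 / 2 + (u * (v^2 + v * u - u^2) * W) * v ^ 2 / 2 - 12 * v * W * u ^ 4 / 24 - 12 * u * W * v ^ 4 / 24 = 0" for u v W :: real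
  by (simp add: field_simps eval_nat_numeral)
lemma poly_e5: "- (v * (u^2 + v * u - v^2) * W) * u ^ 3 / 6 + (u * (v^2 + v * u - u^2) * W) * v ^ 3 / 6 + 12 * v * W * u ^ 5 / 120 - 12 * u * W * v ^ 5 / 120 - (u * v * (v-u) * (2 * u ^ 2+2 * v ^ 2+5 * u * v)/30 * ((u + v) * W)) = 0" for u v W :: real
  by (simp add: field_simps eval_nat_numeral)
lemma lin_comb: "(Dd * (F2 - u * F3 + u ^ 2/2 * F4 - u ^ 3/6 * F5 + r3) + F2 + Ee * (F2 + v * F3 + v ^ 2/2 * F4 + v ^ 3/6 * F5 + r4)
   - (A * (F0 - u * F1 + u ^ 2/2 * F2 - u ^ 3/6 * F3 + u ^ 4/24 * F4 - u ^ 5/120 * F5 + r1) + B * F0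
      + Cc * (F0 + v * F1 + v ^ 2/2 * F2 + v ^ 3/6 * F3 + v ^ 4/24 * F4 + v ^ 5/120 * F5 + r2)))
   - (K * F5 + Dd * r3 + Ee * r4 - A * r1 - Cc * r2) = (- A - B - Cc) * F0 + (A * u - Cc * v) * F1
     + (Dd + 1 + Ee - A * u ^ 2 / 2 - Cc * v ^ 2 / 2) * F2
     + (- Dd * u + Ee * v + A * u ^ 3 / 6 - Cc * v ^ 3 / 6) * F3
     + (Dd * u ^ 2 / 2 + Ee * v ^ 2 / 2 - A * u ^ 4 / 24 - Cc * v ^ 4 / 24) * F4
     + (- Dd * u ^ 3 / 6 + Ee * v ^ 3 / 6 + A * u ^ 5 / 120 - Cc * v ^ 5 / 120 - K) * F5"
  for u v :: real
  by (simp add: algebra_simps)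

lemma setup_W:
  fixes u v :: real assumes "u>0" "v>0"
  defines "W \<equiv> 1 / ((u + v) * Dc u v)"
  shows "ca u v = 12 * v * W" "cc u v = 12 * u * W"
     "cd u v = (v * (u^2 + v * u - v^2) * W)" "ce u v = (u * (v^2 + v * u - u^2) * W)"
     "cb u v = (- 12 * (u + v) * W)" "1 / Dc u v = (u + v) * W" "W * ((u + v) * (u^2 + 3 * u * v + v^2)) = 1"
proof -
  have D0: "Dc u v > 0" using assms unfolding Dc_def by (simp add: add_pos_pos)
  have s: "u + v > 0" using assms by simp
  show "ca u v = 12 * v * W" "cc u v = 12 * u * W"
     "cd u v = v * (u^2 + v * u - v^2) * W" "ce u v = u * (v^2 + v * u - u^2) * W"
    unfolding ca_def cc_def cd_def ce_def W_def by simp_all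
  show "cb u v = - 12 * (u + v) * W" "1 / Dc u v = (u + v) * W"
    unfolding cb_def W_def using s D0 by (simp_all add: divide_simps)
  have "W * ((u + v) * Dc u v) = 1" unfolding W_def using D0 s by simp
  then show "W * ((u + v) * (u^2 + 3 * u * v + v^2)) = 1" unfolding Dc_def by simp
qed

lemma key:
  fixes u v :: real
  assumes "u>0" "v>0"
  shows "cd u v * (F2 - u * F3 + u ^ 2/2 * F4 - u ^ 3/6 * F5 + r3) + F2 + ce u v * (F2 + v * F3 + v ^ 2/2 * F4 + v ^ 3/6 * F5 + r4)
   - (ca u v * (F0 - u * F1 + u ^ 2/2 * F2 - u ^ 3/6 * F3 + u ^ 4/24 * F4 - u ^ 5/120 * F5 + r1) + cb u v * F0
      + cc u v * (F0 + v * F1 + v ^ 2/2 * F2 + v ^ 3/6 * F3 + v ^ 4/24 * F4 + v ^ 5/120 * F5 + r2))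
   = u * v * (v-u) * (2 * u ^ 2+2 * v ^ 2+5 * u * v)/(30 * Dc u v) * F5 + cd u v * r3 + ce u v * r4 - ca u v * r1 - cc u v * r2"
    (is "?lhs = ?rhs")
proof -
  define W where "W = 1 / ((u + v) * Dc u v)"
  note sw = setup_W[OF assms, folded W_def]
  have K: "u * v * (v-u) * (2 * u ^ 2+2 * v ^ 2+5 * u * v)/(30 * Dc u v) = (u * v * (v-u) * (2 * u ^ 2+2 * v ^ 2+5 * u * v)/30 * ((u + v) * W))"
  proof -
    have "u * v * (v-u) * (2 * u ^ 2+2 * v ^ 2+5 * u * v)/(30 * Dc u v) = u * v * (v-u) * (2 * u ^ 2+2 * v ^ 2+5 * u * v)/30 * (1 / Dc u v)" by simp
    then show ?thesis unfolding sw(6) .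
  qed
  have e0: "- ca u v - cb u v - cc u v = 0" unfolding sw(1-5) using poly_e0[where u=u and v=v and W=W] by simp
  have e1: "ca u v * u - cc u v * v = 0" unfolding sw(1-5) using poly_e1[where u=u and v=v and W=W] by simp
  have e2: "cd u v + 1 + ce u v - ca u v * u ^ 2 / 2 - cc u v * v ^ 2 / 2 = 0" unfolding sw(1-5) using poly_e2[where u=u and v=v and W=W] sw(7) by simp
  have e3: "- cd u v * u + ce u v * v + ca u v * u ^ 3 / 6 - cc u v * v ^ 3 / 6 = 0" unfolding sw(1-5) using poly_e3[where u=u and v=v and W=W] by simp
  have e4: "cd u v * u ^ 2 / 2 + ce u v * v ^ 2 / 2 - ca u v * u ^ 4 / 24 - cc u v * v ^ 4 / 24 = 0" unfolding sw(1-5) using poly_e4[where u=u and v=v and W=W] by simp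
  have e5: "- cd u v * u ^ 3 / 6 + ce u v * v ^ 3 / 6 + ca u v * u ^ 5 / 120 - cc u v * v ^ 5 / 120
      - u * v * (v-u) * (2 * u ^ 2+2 * v ^ 2+5 * u * v)/(30 * Dc u v) = 0" unfolding K sw(1-5) using poly_e5[where u=u and v=v and W=W] by simp
  have "?lhs - ?rhs = (- ca u v - cb u v - cc u v) * F0 + (ca u v * u - cc u v * v) * F1
     + (cd u v + 1 + ce u v - ca u v * u ^ 2 / 2 - cc u v * v ^ 2 / 2) * F2
     + (- cd u v * u + ce u v * v + ca u v * u ^ 3 / 6 - cc u v * v ^ 3 / 6) * F3
     + (cd u v * u ^ 2 / 2 + ce u v * v ^ 2 / 2 - ca u v * u ^ 4 / 24 - cc u v * v ^ 4 / 24) * F4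
     + (- cd u v * u ^ 3 / 6 + ce u v * v ^ 3 / 6 + ca u v * u ^ 5 / 120 - cc u v * v ^ 5 / 120
      - u * v * (v-u) * (2 * u ^ 2+2 * v ^ 2+5 * u * v)/(30 * Dc u v)) * F5"
    by (rule lin_comb)
  also have "\<dots> = 0" unfolding e0 e1 e2 e3 e4 e5 by simp
  finally have "?lhs - ?rhs = 0" .
  then show ?thesis by simp
qed
lemma coef_bounds:
  fixes u v :: real
  assumes u: "u>0" and v: "v>0"
  shows "\<bar>cd u v\<bar> \<le> 1" "\<bar>ce u v\<bar> \<le> 1" "\<bar>ca u v\<bar> * u^6 \<le> 12 * u^4"
    "\<bar>cc u v\<bar> * v^6 \<le> 12 * v^4"
    "\<bar>u * v * (v-u) * (2 * u ^ 2+2 * v ^ 2+5 * u * v)/(30 * Dc u v)\<bar> \<le> u * v * \<bar>v - u\<bar> / 15"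
proof -
  have D0: "Dc u v > 0" using assms unfolding Dc_def by (simp add: add_pos_pos)
  have s: "u + v > 0" using assms by simp
  have P: "(u+v) * Dc u v > 0" using D0 s by simp
  have "\<bar>v * (u\<^sup>2 + v * u - v\<^sup>2)\<bar> \<le> (u+v) * Dc u v"
  proof -
    have "\<bar>v * (u\<^sup>2 + v * u - v\<^sup>2)\<bar> = v * \<bar>u\<^sup>2 + v * u - v\<^sup>2\<bar>" using v by (simp add: abs_mult)
    also have "\<dots> \<le> (u+v) * Dc u v"
      apply (rule mult_mono) using u v unfolding Dc_def by (auto simp: abs_le_iff power2_eq_square add_pos_pos)
    finally show ?thesis .
  qed
  then show "\<bar>cd u v\<bar> \<le> 1" unfolding cd_def using P by (simp add: abs_divide)
  have "\<bar>u * (v\<^sup>2 + v * u - u\<^sup>2)\<bar> \<le> (u+v) * Dc u v"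
  proof -
    have "\<bar>u * (v\<^sup>2 + v * u - u\<^sup>2)\<bar> = u * \<bar>v\<^sup>2 + v * u - u\<^sup>2\<bar>" using u by (simp add: abs_mult)
    also have "\<dots> \<le> (u+v) * Dc u v"
      apply (rule mult_mono) using u v unfolding Dc_def by (auto simp: abs_le_iff power2_eq_square add_pos_pos)
    finally show ?thesis .
  qed
  then show "\<bar>ce u v\<bar> \<le> 1" unfolding ce_def using P by (simp add: abs_divide)
  have "12 * v * u^6 \<le> 12 * u^4 * ((u+v) * Dc u v)"
  proof -
    have "v * u^2 \<le> (u+v) * Dc u v" apply (rule mult_mono) using u v unfolding Dc_def by (auto simp: power2_eq_square add_pos_pos)
    hence "u^4 * (v * u^2) \<le> u^4 * ((u+v) * Dc u v)" using u by (simp add: mult_left_mono)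
    thus ?thesis by (simp add: algebra_simps power_add[symmetric] eval_nat_numeral)
  qed
  hence "(12 * v * u ^ 6)/((u+v) * Dc u v) \<le> 12  *  u ^ 4" by (simp add: pos_divide_le_eq[OF P])
  moreover have "\<bar>ca u v\<bar>  *  u ^ 6 = (12 * v * u ^ 6)/((u+v) * Dc u v)" unfolding ca_def using u v P D0 by (simp add: abs_divide abs_mult)
  ultimately show "\<bar>ca u v\<bar>  *  u ^ 6 \<le> 12  *  u ^ 4" by simp
  have "12 * u * v^6 \<le> 12 * v^4 * ((u+v) * Dc u v)"
  proof -
    have "u * v^2 \<le> (u+v) * Dc u v" apply (rule mult_mono) using u v unfolding Dc_def by (auto simp: power2_eq_square add_pos_pos)
    hence "v^4 * (u * v^2) \<le> v^4 * ((u+v) * Dc u v)" using v by (simp add: mult_left_mono)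
    thus ?thesis by (simp add: algebra_simps power_add[symmetric] eval_nat_numeral)
  qed
  hence "(12 * u * v ^ 6)/((u+v) * Dc u v) \<le> 12  *  v ^ 4" by (simp add: pos_divide_le_eq[OF P])
  moreover have "\<bar>cc u v\<bar>  *  v ^ 6 = (12 * u * v ^ 6)/((u+v) * Dc u v)" unfolding cc_def using u v P D0 by (simp add: abs_divide abs_mult)
  ultimately show "\<bar>cc u v\<bar> * v^6 \<le> 12 * v^4" by simp
  have q: "0 \<le> 2 * u ^ 2+2 * v ^ 2+5 * u * v" "2 * u ^ 2+2 * v ^ 2+5 * u * v \<le> 2 * Dc u v"
    using u v unfolding Dc_def by (auto simp: add_pos_pos)
  have "\<bar>u * v * (v-u) * (2 * u ^ 2+2 * v ^ 2+5 * u * v)/(30 * Dc u v)\<bar>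
     = (u * v * \<bar>v-u\<bar>) * (2 * u ^ 2+2 * v ^ 2+5 * u * v)/(30 * Dc u v)"
    using u v q D0 by (simp add: abs_mult abs_divide)
  also have "\<dots> \<le> (u * v * \<bar>v-u\<bar>) * (2 * Dc u v)/(30 * Dc u v)"
    apply (rule divide_right_mono) apply (rule mult_left_mono) using q u v D0 by auto
  also have "\<dots> = u * v * \<bar>v - u\<bar> / 15" using D0 by simp
  finally show "\<bar>u * v * (v-u) * (2 * u ^ 2+2 * v ^ 2+5 * u * v)/(30 * Dc u v)\<bar> \<le> u * v * \<bar>v - u\<bar> / 15" .
qed
lemma cont_bound:
  fixes g :: "real \<Rightarrow> real"
  assumes "continuous_on {a..b} g"
  shows "\<exists>B\<ge>0. \<forall>x\<in>{a..b}. \<bar>g x\<bar> \<le> B"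
proof -
  have "compact (g ` {a..b})" using assms by (intro compact_continuous_image) auto
  hence "bounded (g ` {a..b})" by (rule compact_imp_bounded)
  then obtain B where B: "\<forall>y\<in>g ` {a..b}. norm y \<le> B" unfolding bounded_iff by blast
  show ?thesis apply (rule exI[of _ "max B 0"]) using B by force
qed

lemma taylor6:
  fixes D :: "nat \<Rightarrow> real \<Rightarrow> real"
  assumes C: "Ck_derivs 6 D {a..b}" and M: "\<forall>x\<in>{a..b}. \<bar>D 6 x\<bar> \<le> M"
    and x: "x \<in> {a..b}" and y: "y \<in> {a..b}"
  shows "\<bar>D 0 y - (D 0 x + D 1 x * (y - x) + D 2 x * (y - x)^2 / 2 + D 3 x * (y - x)^3 / 6
            + D 4 x * (y - x)^4 / 24 + D 5 x * (y - x)^5 / 120)\<bar> \<le> M * \<bar>y - x\<bar>^6 / 120"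
proof -
  have "norm (D 0 y - (\<Sum>i\<le>5. D i x * (y - x) ^ i / fact i)) \<le> M * norm (y - x) ^ Suc 5 / fact 5"
    apply (rule field_Taylor[where S="{a..b}"])
    using C M x y unfolding Ck_derivs_def by auto
  moreover have "(\<Sum>i\<le>5. D i x * (y - x) ^ i / fact i) = D 0 x + D 1 x * (y - x) + D 2 x * (y - x)^2 / 2 + D 3 x * (y - x)^3 / 6
            + D 4 x * (y - x)^4 / 24 + D 5 x * (y - x)^5 / 120"
    by (simp add: eval_nat_numeral fact_Suc)
  moreover have "(fact 5 :: real) = 120" by (simp add: eval_nat_numeral fact_Suc)
  ultimately show ?thesis by simp
qed

lemma taylor4:
  fixes D :: "nat \<Rightarrow> real \<Rightarrow> real"
  assumes C: "Ck_derivs 6 D {a..b}" and M: "\<forall>x\<in>{a..b}. \<bar>D 6 x\<bar> \<le> M"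
    and x: "x \<in> {a..b}" and y: "y \<in> {a..b}"
  shows "\<bar>D 2 y - (D 2 x + D 3 x * (y - x) + D 4 x * (y - x)^2 / 2 + D 5 x * (y - x)^3 / 6)\<bar>
      \<le> M * \<bar>y - x\<bar>^4 / 6"
proof -
  have "norm ((\<lambda>i. D (i + 2)) 0 y - (\<Sum>i\<le>3. (\<lambda>i. D (i + 2)) i x * (y - x) ^ i / fact i)) \<le> M * norm (y - x) ^ Suc 3 / fact 3"
    apply (rule field_Taylor[where S="{a..b}"])
    using C M x y unfolding Ck_derivs_def by (auto simp: eval_nat_numeral)
  moreover have "(\<Sum>i\<le>3. (\<lambda>i. D (i + 2)) i x * (y - x) ^ i / fact i) = D 2 x + D 3 x * (y - x) + D 4 x * (y - x)^2 / 2 + D 5 x * (y - x)^3 / 6"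
    by (simp add: eval_nat_numeral fact_Suc)
  moreover have "(fact 3 :: real) = 6" by (simp add: eval_nat_numeral fact_Suc)
  ultimately show ?thesis by (simp add: numeral_2_eq_2)
qed

lemma taylor1:
  fixes P :: "nat \<Rightarrow> real \<Rightarrow> real"
  assumes C: "Ck_derivs 2 P {a..b}" and M: "\<forall>x\<in>{a..b}. \<bar>P 1 x\<bar> \<le> M"
    and x: "x \<in> {a..b}" and y: "y \<in> {a..b}"
  shows "\<bar>P 0 y - P 0 x\<bar> \<le> M * \<bar>y - x\<bar>"
proof -
  have "norm (P 0 y - (\<Sum>i\<le>0. P i x * (y - x) ^ i / fact i)) \<le> M * norm (y - x) ^ Suc 0 / fact 0"
    apply (rule field_Taylor[where S="{a..b}"])
    using C M x y unfolding Ck_derivs_def by auto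
  then show ?thesis by simp
qed

lemma taylor2:
  fixes P :: "nat \<Rightarrow> real \<Rightarrow> real"
  assumes C: "Ck_derivs 2 P {a..b}" and M: "\<forall>x\<in>{a..b}. \<bar>P 2 x\<bar> \<le> M"
    and x: "x \<in> {a..b}" and y: "y \<in> {a..b}"
  shows "\<bar>P 0 y - (P 0 x + P 1 x * (y - x))\<bar> \<le> M * (y - x)^2"
proof -
  have "norm (P 0 y - (\<Sum>i\<le>1. P i x * (y - x) ^ i / fact i)) \<le> M * norm (y - x) ^ Suc 1 / fact 1"
    apply (rule field_Taylor[where S="{a..b}"])
    using C M x y unfolding Ck_derivs_def by (auto simp: numeral_2_eq_2)
  then show ?thesis by (simp add: power2_eq_square)
qed

theorem lemma1:
  fixes \<phi> :: "real \<Rightarrow> real" and P :: "nat \<Rightarrow> real \<Rightarrow> real"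
    and f :: "real \<Rightarrow> real" and D :: "nat \<Rightarrow> real \<Rightarrow> real"
  assumes phi_mono: "strict_mono_on {0..1} \<phi>"
    and phi_C2: "P 0 = \<phi>" "Ck_derivs 2 P {0..1}"
    and f_C6: "D 0 = f" "Ck_derivs 6 D {\<phi> 0..\<phi> 1}"
  shows "\<exists>C. \<forall>N::nat. N \<ge> 2 \<longrightarrow> (\<forall>n. 1 \<le> n \<and> n \<le> N - 1 \<longrightarrow>
            \<bar>trunc_err \<phi> D N n\<bar> \<le> C * (1 / real N) ^ 4)"
proof -
  let ?S = "{\<phi> 0..\<phi> 1}"
  have CD: "Ck_derivs 6 D ?S" by (rule f_C6(2))
  have CP: "Ck_derivs 2 P {0..1}" by (rule phi_C2(2))
  obtain M6 where M6: "M6 \<ge> 0" "\<forall>x\<in>?S. \<bar>D 6 x\<bar> \<le> M6"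
    using cont_bound[of "\<phi> 0" "\<phi> 1" "D 6"] CD unfolding Ck_derivs_def by auto
  obtain M5 where M5: "M5 \<ge> 0" "\<forall>x\<in>?S. \<bar>D 5 x\<bar> \<le> M5"
    using cont_bound[of "\<phi> 0" "\<phi> 1" "D 5"] CD unfolding Ck_derivs_def by auto
  obtain L1 where L1: "L1 \<ge> 0" "\<forall>x\<in>{0..1}. \<bar>P 1 x\<bar> \<le> L1"
    using cont_bound[of 0 1 "P 1"] CP unfolding Ck_derivs_def by auto
  obtain L2 where L2: "L2 \<ge> 0" "\<forall>x\<in>{0..1}. \<bar>P 2 x\<bar> \<le> L2"
    using cont_bound[of 0 1 "P 2"] CP unfolding Ck_derivs_def by auto
  define C where "C = M6 * L1 ^ 4 + M5 * L1 ^ 2 * (2 * L2) / 15"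
  have phiS: "\<phi> t \<in> ?S" if "t \<in> {0..1}" for t
    using that phi_mono by (auto intro!: strict_mono_on_leD[OF phi_mono])
  show ?thesis
  proof (rule exI[of _ C], intro allI impI)
    fix N n :: nat
    assume N: "N \<ge> 2" and n: "1 \<le> n \<and> n \<le> N - 1"
    define h where "h = 1 / real N"
    define x where "x = real n / real N"
    have Npos: "real N > 0" using N by simp
    have h0: "h > 0" unfolding h_def using Npos by simp
    have xm: "real (n - 1) / real N = x - h" unfolding x_def h_def using n by (simp add: of_nat_diff diff_divide_distrib)
    have xp: "real (Suc n) / real N = x + h" unfolding x_def h_def by (simp add: add_divide_distrib)
    have nN: "real n + 1 \<le> real N" using n N by linarith
    have in01: "x - h \<in> {0..1}" "x \<in> {0..1}" "x + h \<in> {0..1}"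
      unfolding x_def h_def using n nN Npos by (auto simp: field_simps)
    define s where "s = \<phi> x"
    define u where "u = \<phi> x - \<phi> (x - h)"
    define v where "v = \<phi> (x + h) - \<phi> x"
    have u0: "u > 0" unfolding u_def using strict_mono_onD[OF phi_mono in01(1) in01(2)] h0 by simp
    have v0: "v > 0" unfolding v_def using strict_mono_onD[OF phi_mono in01(2) in01(3)] h0 by simp
    have mesh: "mesh \<phi> N (n - 1) = s - u" "mesh \<phi> N n = s" "mesh \<phi> N (Suc n) = s + v"
      unfolding mesh_def s_def u_def v_def xm xp by (simp_all add: x_def)
    have steps: "step \<phi> N (n - 1) = u" "step \<phi> N n = v"
      unfolding step_def using mesh n by (simp_all add: Suc_diff_1)
    have uL: "u \<le> L1 * h"
      using taylor1[OF CP L1(2) in01(1) in01(2)] h0 phi_C2(1) unfolding u_def by simp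
    have vL: "v \<le> L1 * h"
      using taylor1[OF CP L1(2) in01(2) in01(3)] h0 phi_C2(1) unfolding v_def by simp
    have t1: "\<bar>\<phi> (x + h) - (\<phi> x + P 1 x * h)\<bar> \<le> L2 * h^2"
      using taylor2[OF CP L2(2) in01(2) in01(3)] phi_C2(1) by simp
    have t2: "\<bar>\<phi> (x - h) - (\<phi> x - P 1 x * h)\<bar> \<le> L2 * h^2"
      using taylor2[OF CP L2(2) in01(2) in01(1)] phi_C2(1) by simp
    have vu: "\<bar>v - u\<bar> \<le> 2 * L2 * h^2"
    proof -
      have "v - u = (\<phi> (x + h) - (\<phi> x + P 1 x * h)) + (\<phi> (x - h) - (\<phi> x - P 1 x * h))"
        unfolding u_def v_def by simp
      then show ?thesis using t1 t2 by linarith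
    qed
    have sS: "s \<in> ?S" "s - u \<in> ?S" "s + v \<in> ?S"
      unfolding s_def u_def v_def using phiS in01 by auto
    define F0 where "F0 = D 0 s"
    define F1 where "F1 = D 1 s"
    define F2 where "F2 = D 2 s"
    define F3 where "F3 = D 3 s"
    define F4 where "F4 = D 4 s"
    define F5 where "F5 = D 5 s"
    define r1 where "r1 = D 0 (s - u) - (F0 - u * F1 + u ^ 2/2 * F2 - u ^ 3/6 * F3 + u ^ 4/24 * F4 - u ^ 5/120 * F5)"
    define r2 where "r2 = D 0 (s + v) - (F0 + v * F1 + v ^ 2/2 * F2 + v ^ 3/6 * F3 + v ^ 4/24 * F4 + v ^ 5/120 * F5)"
    define r3 where "r3 = D 2 (s - u) - (F2 - u * F3 + u ^ 2/2 * F4 - u ^ 3/6 * F5)"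
    define r4 where "r4 = D 2 (s + v) - (F2 + v * F3 + v ^ 2/2 * F4 + v ^ 3/6 * F5)"
    have r1b: "\<bar>r1\<bar> \<le> M6 * u ^ 6 / 120"
      using taylor6[OF CD M6(2) sS(1) sS(2)] u0 unfolding r1_def F0_def F1_def F2_def F3_def F4_def F5_def
      by (simp add: algebra_simps)
    have r2b: "\<bar>r2\<bar> \<le> M6 * v ^ 6 / 120"
      using taylor6[OF CD M6(2) sS(1) sS(3)] v0 unfolding r2_def F0_def F1_def F2_def F3_def F4_def F5_def
      by (simp add: algebra_simps)
    have r3b: "\<bar>r3\<bar> \<le> M6 * u ^ 4 / 6"
      using taylor4[OF CD M6(2) sS(1) sS(2)] u0 unfolding r3_def F2_def F3_def F4_def F5_def
      by (simp add: algebra_simps)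
    have r4b: "\<bar>r4\<bar> \<le> M6 * v ^ 4 / 6"
      using taylor4[OF CD M6(2) sS(1) sS(3)] v0 unfolding r4_def F2_def F3_def F4_def F5_def
      by (simp add: algebra_simps)
    define K5 where "K5 = u * v * (v-u) * (2 * u ^ 2+2 * v ^ 2+5 * u * v)/(30 * Dc u v)"
    have E: "trunc_err \<phi> D N n = K5 * F5 + cd u v * r3 + ce u v * r4 - ca u v * r1 - cc u v * r2"
    proof -
      have "trunc_err \<phi> D N n = cd u v * D 2 (s - u) + D 2 s + ce u v * D 2 (s + v)
          - (ca u v * D 0 (s - u) + cb u v * D 0 s + cc u v * D 0 (s + v))"
        unfolding trunc_err_def Let_def steps mesh by simp
      also have "\<dots> = cd u v * (F2 - u * F3 + u ^ 2/2 * F4 - u ^ 3/6 * F5 + r3) + F2 + ce u v * (F2 + v * F3 + v ^ 2/2 * F4 + v ^ 3/6 * F5 + r4)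
   - (ca u v * (F0 - u * F1 + u ^ 2/2 * F2 - u ^ 3/6 * F3 + u ^ 4/24 * F4 - u ^ 5/120 * F5 + r1) + cb u v * F0
      + cc u v * (F0 + v * F1 + v ^ 2/2 * F2 + v ^ 3/6 * F3 + v ^ 4/24 * F4 + v ^ 5/120 * F5 + r2))"
        unfolding r1_def r2_def r3_def r4_def F0_def F2_def by simp
      also have "\<dots> = K5 * F5 + cd u v * r3 + ce u v * r4 - ca u v * r1 - cc u v * r2"
        unfolding K5_def by (rule key[OF u0 v0])
      finally show ?thesis .
    qed
    note cb = coef_bounds[OF u0 v0]
    have F5b: "\<bar>F5\<bar> \<le> M5" unfolding F5_def using M5(2) sS(1) by blast
    have u4: "u ^ 4 \<le> (L1 * h) ^ 4" using uL u0 by (intro power_mono) auto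
    have v4: "v ^ 4 \<le> (L1 * h) ^ 4" using vL v0 by (intro power_mono) auto
    have b1: "\<bar>K5 * F5\<bar> \<le> M5 * L1 ^ 2 * (2 * L2) / 15 * h ^ 4"
    proof -
      have "\<bar>K5 * F5\<bar> \<le> (u * v * \<bar>v - u\<bar> / 15) * M5"
        unfolding abs_mult using cb(5) F5b M5(1) u0 v0 unfolding K5_def by (intro mult_mono) auto
      also have "\<dots> \<le> ((L1 * h) * (L1 * h) * (2 * L2 * h ^ 2) / 15) * M5"
        apply (intro mult_right_mono divide_right_mono mult_mono vu uL vL)
        using u0 v0 h0 L1 M5 by auto
      also have "\<dots> = M5 * L1 ^ 2 * (2 * L2) / 15 * h ^ 4" by (simp add: power2_eq_square eval_nat_numeral)
      finally show ?thesis .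
    qed
    have b3: "\<bar>cd u v * r3\<bar> \<le> M6 * (L1 * h) ^ 4 / 6"
    proof -
      have "\<bar>cd u v * r3\<bar> \<le> 1 * (M6 * u ^ 4 / 6)" unfolding abs_mult
        using cb(1) r3b by (intro mult_mono) auto
      also have "\<dots> \<le> M6 * (L1 * h) ^ 4 / 6" using u4 M6(1) by (simp add: mult_left_mono)
      finally show ?thesis .
    qed
    have b4: "\<bar>ce u v * r4\<bar> \<le> M6 * (L1 * h) ^ 4 / 6"
    proof -
      have "\<bar>ce u v * r4\<bar> \<le> 1 * (M6 * v ^ 4 / 6)" unfolding abs_mult
        using cb(2) r4b by (intro mult_mono) auto
      also have "\<dots> \<le> M6 * (L1 * h) ^ 4 / 6" using v4 M6(1) by (simp add: mult_left_mono)
      finally show ?thesis .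
    qed
    have b5: "\<bar>ca u v * r1\<bar> \<le> M6 * (L1 * h) ^ 4 / 10"
    proof -
      have "\<bar>ca u v * r1\<bar> \<le> \<bar>ca u v\<bar> * (M6 * u ^ 6 / 120)" unfolding abs_mult
        using r1b by (intro mult_left_mono) auto
      also have "\<dots> = M6 / 120 * (\<bar>ca u v\<bar> * u ^ 6)" by simp
      also have "\<dots> \<le> M6 / 120 * (12 * u ^ 4)" using cb(3) M6(1) by (intro mult_left_mono) auto
      also have "\<dots> \<le> M6 * (L1 * h) ^ 4 / 10" using u4 M6(1) by (simp add: mult_left_mono)
      finally show ?thesis .
    qed
    have b6: "\<bar>cc u v * r2\<bar> \<le> M6 * (L1 * h) ^ 4 / 10"
    proof -
      have "\<bar>cc u v * r2\<bar> \<le> \<bar>cc u v\<bar> * (M6 * v ^ 6 / 120)" unfolding abs_mult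
        using r2b by (intro mult_left_mono) auto
      also have "\<dots> = M6 / 120 * (\<bar>cc u v\<bar> * v ^ 6)" by simp
      also have "\<dots> \<le> M6 / 120 * (12 * v ^ 4)" using cb(4) M6(1) by (intro mult_left_mono) auto
      also have "\<dots> \<le> M6 * (L1 * h) ^ 4 / 10" using v4 M6(1) by (simp add: mult_left_mono)
      finally show ?thesis .
    qed
    have "M6 * (L1 * h) ^ 4 \<ge> 0" using M6(1) by simp
    hence "\<bar>trunc_err \<phi> D N n\<bar> \<le> M5 * L1 ^ 2 * (2 * L2) / 15 * h ^ 4 + M6 * (L1 * h) ^ 4"
      unfolding E using b1 b3 b4 b5 b6 by linarith
    also have "\<dots> = C * h ^ 4" unfolding C_def by (simp add: algebra_simps power_mult_distrib)
    finally show "\<bar>trunc_err \<phi> D N n\<bar> \<le> C * (1 / real N) ^ 4" unfolding h_def .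
  qed
qed

end
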